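(* Let $P\subset\mathbb R^d$ be a $d$-polytope with $d\geq 3$, let $S$ be a simplex facet of $P$ in bounded position, and let $\mathcal F,\mathcal N\subseteq\operatorname{adj}(S)$ be disjoint with $\mathcal F$ nonsimple. Let $v\in V_S(\mathcal F,\mathcal N;P)$ and $Q=\operatorname{conv}(P\cup\{v\})$. Then for $0\leq k\leq d-2$, a $k$-face $G$ of $P$ is a $k$-face of $Q$ if and only if there is a facet $F$ of $P$ with $F\notin\mathcal F\cup\mathcal N\cup\{S\}$ and $G\subseteq F$.
   Context: For a facet $F$ of a $d$-polytope $P\subset\mathbb R^d$ let $H_F=\{x:\langle x,a_F\rangle=\ell_F\}$ be its affine hull, oriented so that $P\subseteq\{x:\langle x,a_F\rangle\geq \ell_F\}$; put $H_F^+=\{x:\langle x,a_F\rangle>\ell_F\}$, $H_F^-=\{x:\langle x,a_F\rangle<\ell_F\}$. Two facets are adjacent if they share a ridge ($(d-2)$-face); $\operatorname{adj}(S)$ is the set of facets adjacent to the facet $S$. A simplex facet is a facet combinatorially equivalent to a $(d-1)$-simplex. A facet $S$ is in bounded position if for every set of $d$ facets in $\operatorname{adj}(S)$ the hyperplanes $H_F$ of these facets intersect in a point of $H_S^-$. A subset $\mathcal F\subseteq\operatorname{adj}(S)$ is nonsimple if there is no pair of adjacent facets $G,G'\in\mathcal F$ having a common $(d-3)$-face with $S$. For disjoint $\mathcal F,\mathcal N\subseteq\operatorname{adj}(S)$, $V_S(\mathcal F,\mathcal N;P)$ is the set of points lying in $H_F^-$ for all $F\in\mathcal N\cup\{S\}$,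 in $H_F$ for all $F\in\mathcal F$, and in $H_F^+$ for all other facets $F$ of $P$. (The polytope $Q$ is called the pseudo-stacking of $P$ above $S$ with respect to $\mathcal F,\mathcal N$.) *)

theory Defs
  imports "HOL-Analysis.Analysis"
begin

definition hplus :: "'a::euclidean_space set \<Rightarrow> 'a set \<Rightarrow> 'a set" where
  "hplus P F = {x. \<exists>a l. a \<noteq> 0 \<and> affine hull F = {y. a \<bullet> y = l} \<and>
                      P \<subseteq> {y. a \<bullet> y \<ge> l} \<and> a \<bullet> x > l}"

definition hminus :: "'a::euclidean_space set \<Rightarrow> 'a set \<Rightarrow> 'a set" where
  "hminus P F = {x. \<exists>a l. a \<noteq> 0 \<and> affine hull F = {y. a \<bullet> y = l} \<and>
                      P \<subseteq> {y. a \<bullet> y \<ge> l} \<and> a \<bullet> x < l}"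

definition adjacent_facets :: "'a::euclidean_space set \<Rightarrow> 'a set \<Rightarrow> 'a set \<Rightarrow> bool" where
  "adjacent_facets P F G \<longleftrightarrow> F facet_of P \<and> G facet_of P \<and> F \<noteq> G \<and>
     (F \<inter> G) face_of P \<and> aff_dim (F \<inter> G) = aff_dim P - 2"

definition adj :: "'a::euclidean_space set \<Rightarrow> 'a set \<Rightarrow> 'a set set" where
  "adj P S = {F. adjacent_facets P S F}"

definition comb_equiv :: "'a::euclidean_space set \<Rightarrow> 'a set \<Rightarrow> bool" where
  "comb_equiv A B \<longleftrightarrow> (\<exists>f. bij_betw f {X. X face_of A} {Y. Y face_of B} \<and>
     (\<forall>X Y. X face_of A \<longrightarrow> Y face_of A \<longrightarrow> (X \<subseteq> Y \<longleftrightarrow> f X \<subseteq> f Y)))"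

definition simplex_facet :: "'a::euclidean_space set \<Rightarrow> 'a set \<Rightarrow> bool" where
  "simplex_facet P S \<longleftrightarrow> S facet_of P \<and>
     (\<exists>T. (int DIM('a) - 1) simplex T \<and> comb_equiv S T)"

definition bounded_position :: "'a::euclidean_space set \<Rightarrow> 'a set \<Rightarrow> bool" where
  "bounded_position P S \<longleftrightarrow>
     (\<forall>X. X \<subseteq> adj P S \<and> card X = DIM('a) \<longrightarrow>
        (\<exists>p. \<Inter> ((\<lambda>F. affine hull F) ` X) = {p} \<and> p \<in> hminus P S))"

definition nonsimple :: "'a::euclidean_space set \<Rightarrow> 'a set \<Rightarrow> 'a set set \<Rightarrow> bool" where
  "nonsimple P S \<F> \<longleftrightarrow>
     \<not> (\<exists>G\<in>\<F>. \<exists>G'\<in>\<F>. adjacent_facets P G G' \<and>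
          (G \<inter> G' \<inter> S) face_of P \<and> aff_dim (G \<inter> G' \<inter> S) = int DIM('a) - 3)"

definition VS :: "'a::euclidean_space set \<Rightarrow> 'a set \<Rightarrow> 'a set set \<Rightarrow> 'a set set \<Rightarrow> 'a set" where
  "VS P S \<F> \<N> = {x. (\<forall>F \<in> insert S \<N>. x \<in> hminus P F) \<and>
                     (\<forall>F \<in> \<F>. x \<in> affine hull F) \<and>
                     (\<forall>F. F facet_of P \<and> F \<notin> insert S (\<F> \<union> \<N>) \<longrightarrow> x \<in> hplus P F)}"

end

theory Submission imports Defs begin

lemma hyp_unique:
  fixes a a' :: "'a::euclidean_space"
  assumes "a \<noteq> 0" "{x. a \<bullet> x = b} = {x. a' \<bullet> x = b'}"
  shows "\<exists>k. a' = k *\<^sub>R a \<and> b' = k * b"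
proof -
  define x0 where "x0 = (b / (a \<bullet> a)) *\<^sub>R a"
  have aa: "a \<bullet> a \<noteq> 0" using assms(1) by simp
  have x0: "a \<bullet> x0 = b" using aa by (simp add: x0_def)
  define k where "k = (a' \<bullet> a) / (a \<bullet> a)"
  define u where "u = a' - k *\<^sub>R a"
  have au: "a \<bullet> u = 0" using aa by (simp add: u_def k_def inner_diff_right inner_commute)
  have "a \<bullet> (x0 + u) = b" using x0 au by (simp add: inner_add_right)
  hence e1: "a' \<bullet> (x0 + u) = b'" using assms(2) by blast
  have e2: "a' \<bullet> x0 = b'" using x0 assms(2) by blast
  have "a' \<bullet> u = 0" using e1 e2 by (simp add: inner_add_right)
  moreover have "a' \<bullet> u = u \<bullet> u"
    using au by (simp add: u_def inner_diff_left inner_diff_right inner_commute)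
  ultimately have "u = 0" by simp
  hence "a' = k *\<^sub>R a" by (simp add: u_def)
  moreover have "b' = k * b" using e2 x0 \<open>a' = k *\<^sub>R a\<close> by simp
  ultimately show ?thesis by blast
qed

lemma hminus_notin:
  assumes "v \<in> hminus P S" "x \<in> P" shows "v \<noteq> x"
  using assms unfolding hminus_def by force

lemma dir_if:
  fixes P :: "'a::euclidean_space set"
  assumes "polytope P" "G face_of P" "F facet_of P" "G \<subseteq> F" "v \<in> hplus P F"
  shows "G face_of convex hull (insert v P)"
proof -
  obtain a l where al: "a \<noteq> 0" "affine hull F = {y. a \<bullet> y = l}" "P \<subseteq> {y. a \<bullet> y \<ge> l}" "a \<bullet> v > l"
    using assms(5) unfolding hplus_def by blast
  have "G exposed_face_of P"
    using assms(1,2) exposed_face_of_polyhedron polytope_imp_polyhedron by blast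
  then obtain a0 l0 where a0: "P \<subseteq> {x. a0 \<bullet> x \<le> l0}" "G = P \<inter> {x. a0 \<bullet> x = l0}"
    unfolding exposed_face_of_def by blast
  define t where "t = max 0 ((a0 \<bullet> v - l0) / (a \<bullet> v - l)) + 1"
  have t0: "t > 0" by (simp add: t_def)
  have "(a0 \<bullet> v - l0) / (a \<bullet> v - l) < t" by (simp add: t_def)
  hence tv: "a0 \<bullet> v - l0 < t * (a \<bullet> v - l)" using al(4) by (simp add: divide_less_eq)
  define c where "c = a0 - t *\<^sub>R a"
  define d where "d = l0 - t * l"
  have cP: "c \<bullet> x \<le> d" if "x \<in> P" for x
  proof -
    have "a0 \<bullet> x \<le> l0" "a \<bullet> x \<ge> l" using that a0(1) al(3) by auto
    hence "t * l \<le> t * (a \<bullet> x)" using t0 by simp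
    thus ?thesis using \<open>a0 \<bullet> x \<le> l0\<close> by (simp add: c_def d_def inner_diff_left)
  qed
  have cv: "c \<bullet> v < d" using tv by (simp add: c_def d_def inner_diff_left algebra_simps)
  let ?Q = "convex hull (insert v P)"
  have Pne: "P \<noteq> {}" using assms(2) assms(3) facet_of_def face_of_empty
    by (metis assms(3) face_of_empty facet_of_def)
  have convP: "convex P" using assms(1) polytope_imp_convex by blast
  have Qsub: "?Q \<subseteq> {x. c \<bullet> x \<le> d}"
    apply (rule hull_minimal)
    using cP cv convex_halfspace_le by auto
  have "G = ?Q \<inter> {x. c \<bullet> x = d}"
  proof
    show "G \<subseteq> ?Q \<inter> {x. c \<bullet> x = d}"
    proof
      fix x assume x: "x \<in> G"
      have xP: "x \<in> P" using x a0(2) by blast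
      have "x \<in> F" using x assms(4) by blast
      hence "x \<in> affine hull F" by (rule hull_inc)
      hence "a \<bullet> x = l" using al(2) by blast
      moreover have "a0 \<bullet> x = l0" using x a0(2) by blast
      ultimately have "c \<bullet> x = d" by (simp add: c_def d_def inner_diff_left)
      moreover have "x \<in> ?Q" using xP by (simp add: hull_inc)
      ultimately show "x \<in> ?Q \<inter> {x. c \<bullet> x = d}" by blast
    qed
  next
    show "?Q \<inter> {x. c \<bullet> x = d} \<subseteq> G"
    proof
      fix x assume x: "x \<in> ?Q \<inter> {x. c \<bullet> x = d}"
      have hP: "convex hull P = P" using convP by (simp add: convex_hull_eq)
      have "x \<in> {(1 - u) *\<^sub>R v + u *\<^sub>R y |y u. 0 \<le> u \<and> u \<le> 1 \<and> y \<in> P}"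
        using x convex_hull_insert_alt[of v P] Pne hP by simp
      then obtain y u where yu: "0 \<le> u" "u \<le> 1" "y \<in> P" "x = (1 - u) *\<^sub>R v + u *\<^sub>R y"
        by blast
      have cx: "c \<bullet> x = (1 - u) * (c \<bullet> v) + u * (c \<bullet> y)" using yu(4) by (simp add: inner_add_right)
      have cy: "c \<bullet> y \<le> d" using cP yu(3) by blast
      have u1: "u = 1"
      proof (rule ccontr)
        assume "u \<noteq> 1"
        hence "0 < 1 - u" using yu(2) by simp
        hence "(1 - u) * (c \<bullet> v) < (1 - u) * d" using cv by simp
        moreover have "u * (c \<bullet> y) \<le> u * d" using cy yu(1) by (simp add: mult_left_mono)
        ultimately have "c \<bullet> x < d" using cx by (simp add: algebra_simps)
        thus False using x by simp
      qed
      hence xy: "x = y" using yu(4) by simp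
      have "c \<bullet> y = d" using x xy by simp
      hence eq: "a0 \<bullet> y - l0 = t * (a \<bullet> y - l)" by (simp add: c_def d_def inner_diff_left algebra_simps)
      have "a0 \<bullet> y \<le> l0" "a \<bullet> y \<ge> l" using yu(3) a0(1) al(3) by auto
      hence "t * (a \<bullet> y - l) \<ge> 0" using t0 by simp
      hence "a0 \<bullet> y = l0" using eq \<open>a0 \<bullet> y \<le> l0\<close> by linarith
      thus "x \<in> G" using a0(2) xy yu(3) by blast
    qed
  qed
  moreover have "(?Q \<inter> {x. c \<bullet> x = d}) face_of ?Q"
    using exposed_face_of_Int_supporting_hyperplane_le[of ?Q c d] Qsub
    by (auto simp: exposed_face_of_def)
  ultimately show ?thesis by simp
qed

lemma dir_only:
  fixes P :: "'a::euclidean_space set"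
  assumes poly: "polytope P" and full: "aff_dim P = int DIM('a)" and GP: "G face_of P" and Gne: "G \<noteq> {}"
    and GQ: "G face_of convex hull (insert v P)" and vP: "v \<notin> P"
    and key: "\<And>F a l. F facet_of P \<Longrightarrow> G \<subseteq> F \<Longrightarrow> a \<noteq> 0 \<Longrightarrow> affine hull F = {y. a \<bullet> y = l}
               \<Longrightarrow> P \<subseteq> {y. a \<bullet> y \<ge> l} \<Longrightarrow> a \<bullet> v \<le> l"
  shows False
proof -
  have ph: "polyhedron P" using poly polytope_imp_polyhedron by blast
  have ahP: "affine hull P = UNIV" using full aff_dim_eq_full by blast
  obtain hs where hs: "finite hs" "P = affine hull P \<inter> \<Inter>hs"
     "\<forall>h\<in>hs. \<exists>a b. a \<noteq> 0 \<and> h = {x. a \<bullet> x \<le> b}"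
     "\<And>F'. F' \<subset> hs \<Longrightarrow> P \<subset> affine hull P \<inter> \<Inter>F'"
    using ph polyhedron_Int_affine_minimal by metis
  obtain A B where AB: "\<And>h. h \<in> hs \<Longrightarrow> A h \<noteq> 0 \<and> h = {x. A h \<bullet> x \<le> B h}"
    using hs(3) by metis
  have facets: "C facet_of P \<longleftrightarrow> (\<exists>h. h \<in> hs \<and> C = P \<inter> {x. A h \<bullet> x = B h})" for C
    by (rule facet_of_polyhedron_explicit[OF hs(1) hs(2) AB hs(4)])
  have Pin: "x \<in> P \<longleftrightarrow> (\<forall>h\<in>hs. A h \<bullet> x \<le> B h)" for x
  proof -
    have "x \<in> P \<longleftrightarrow> x \<in> \<Inter>hs" using hs(2) ahP by blast
    also have "\<dots> \<longleftrightarrow> (\<forall>h\<in>hs. A h \<bullet> x \<le> B h)" using AB by blast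
    finally show ?thesis .
  qed
  have "convex G" using GP face_of_imp_convex by blast
  then obtain g where g: "g \<in> rel_interior G" using Gne rel_interior_eq_empty by blast
  have gG: "g \<in> G" using g rel_interior_subset by blast
  have GsubP: "G \<subseteq> P" using GP face_of_imp_subset by blast
  have gP: "g \<in> P" using gG GsubP by blast
  have ev: "eventually (\<lambda>e. A h \<bullet> (g + e *\<^sub>R (g - v)) \<le> B h) (at_right (0::real))" if h: "h \<in> hs" for h
  proof (cases "A h \<bullet> g = B h")
    case True
    define C where "C = P \<inter> {x. A h \<bullet> x = B h}"
    have Cf: "C facet_of P" using facets h C_def by blast
    have "G \<subseteq> C"
      apply (rule subset_of_face_of[OF facet_of_imp_face_of[OF Cf] GsubP])
      using g gP True C_def by blast
    have An: "A h \<noteq> 0" using AB h by blast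
    have "affine hull C \<subseteq> {x. A h \<bullet> x = B h}"
      by (rule hull_minimal) (auto simp: C_def affine_hyperplane)
    moreover have "aff_dim (affine hull C) = aff_dim {x. A h \<bullet> x = B h}"
      using Cf full An by (simp add: facet_of_def)
    moreover have "affine hull C \<noteq> {}" using Cf by (simp add: facet_of_def)
    ultimately have "affine hull C = {x. A h \<bullet> x = B h}"
      using affine_dim_equal[of "affine hull C" "{x. A h \<bullet> x = B h}"] affine_hyperplane by auto
    hence aff1: "affine hull C = {x. (- A h) \<bullet> x = - B h}" by auto
    have Psub1: "P \<subseteq> {y. (- A h) \<bullet> y \<ge> - B h}" using Pin h by auto
    have "(- A h) \<bullet> v \<le> - B h"
      using An by (intro key[OF Cf \<open>G \<subseteq> C\<close> _ aff1 Psub1]) simp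
    hence "A h \<bullet> v \<ge> B h" by simp
    have "A h \<bullet> (g + e *\<^sub>R (g - v)) \<le> B h" if "e > 0" for e
    proof -
      have "A h \<bullet> (g + e *\<^sub>R (g - v)) = B h + e * (B h - A h \<bullet> v)"
        using True by (simp add: inner_add_right inner_diff_right)
      also have "\<dots> \<le> B h" using \<open>A h \<bullet> v \<ge> B h\<close> that by (simp add: mult_nonneg_nonpos)
      finally show ?thesis .
    qed
    thus ?thesis using eventually_at_right_real[of 0 1] by (rule eventually_mono[rotated]) auto
  next
    case False
    hence lt: "A h \<bullet> g < B h" using gP Pin h by force
    define \<delta> where "\<delta> = (B h - A h \<bullet> g) / (\<bar>A h \<bullet> (g - v)\<bar> + 1)"
    have dpos: "\<delta> > 0" using lt by (simp add: \<delta>_def)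
    have "A h \<bullet> (g + e *\<^sub>R (g - v)) \<le> B h" if "e \<in> {0<..<\<delta>}" for e
    proof -
      have "e * (\<bar>A h \<bullet> (g - v)\<bar> + 1) \<le> B h - A h \<bullet> g"
        using that by (simp add: \<delta>_def less_divide_eq abs_add_one_gt_zero less_imp_le)
      moreover have "e * (A h \<bullet> (g - v)) \<le> e * (\<bar>A h \<bullet> (g - v)\<bar> + 1)"
        using that by (intro mult_left_mono) auto
      ultimately show ?thesis by (simp add: inner_add_right)
    qed
    thus ?thesis using eventually_at_right_real[OF dpos] by (rule eventually_mono[rotated]) auto
  qed
  have "eventually (\<lambda>e. (\<forall>h\<in>hs. A h \<bullet> (g + e *\<^sub>R (g - v)) \<le> B h) \<and> e \<in> {0<..<1}) (at_right (0::real))"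
  proof (rule eventually_conj)
    show "eventually (\<lambda>e. \<forall>h\<in>hs. A h \<bullet> (g + e *\<^sub>R (g - v)) \<le> B h) (at_right (0::real))"
      using ev by (intro eventually_ball_finite[OF hs(1)]) blast
    show "eventually (\<lambda>e. e \<in> {0<..<1}) (at_right (0::real))"
      by (rule eventually_at_right_real) simp
  qed
  then obtain e where e: "\<forall>h\<in>hs. A h \<bullet> (g + e *\<^sub>R (g - v)) \<le> B h" "e > 0"
    using eventually_happens'[OF trivial_limit_at_right_real] by force
  define w where "w = g + e *\<^sub>R (g - v)"
  have wP: "w \<in> P" using Pin e(1) w_def by simp
  define u where "u = e / (1 + e)"
  have u: "0 < u" "u < 1" using e(2) by (auto simp: u_def)
  have "(1 - u) *\<^sub>R w + u *\<^sub>R v = g"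
  proof -
    define c where "c = 1 / (1 + e)"
    have c1: "c * (1 + e) = 1" using e(2) by (simp add: c_def)
    have "1 - u = c" using e(2) by (simp add: u_def c_def field_simps)
    moreover have "u = c * e" by (simp add: u_def c_def)
    moreover have "w = (1 + e) *\<^sub>R g - e *\<^sub>R v" by (simp add: w_def algebra_simps)
    ultimately have "(1 - u) *\<^sub>R w + u *\<^sub>R v = (c * (1 + e)) *\<^sub>R g - (c * e) *\<^sub>R v + (c * e) *\<^sub>R v"
      by (simp add: scaleR_right_diff_distrib)
    also have "\<dots> = g" using c1 by simp
    finally show ?thesis .
  qed
  moreover have "w \<noteq> v" using wP vP by blast
  ultimately have "g \<in> open_segment w v" using u by (auto simp: in_segment)
  moreover have "w \<in> convex hull (insert v P)" "v \<in> convex hull (insert v P)"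
    using wP by (auto simp: hull_inc)
  ultimately have "v \<in> G" using GQ gG unfolding face_of_def by blast
  thus False using GsubP vP by blast
qed

theorem theorem2p11:
  fixes P :: "'a::euclidean_space set" and S :: "'a set"
    and \<F> \<N> :: "'a set set" and v :: 'a
  assumes "DIM('a) \<ge> 3"
    and "polytope P" and "aff_dim P = int DIM('a)"
    and "simplex_facet P S" and "bounded_position P S"
    and "\<F> \<subseteq> adj P S" and "\<N> \<subseteq> adj P S" and "\<F> \<inter> \<N> = {}"
    and "nonsimple P S \<F>"
    and "v \<in> VS P S \<F> \<N>"
  shows "\<forall>k G. 0 \<le> k \<and> k \<le> int DIM('a) - 2 \<and> G face_of P \<and> aff_dim G = k \<longrightarrow>
           ((G face_of convex hull (insert v P) \<and> aff_dim G = k) \<longleftrightarrow>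
            (\<exists>F. F facet_of P \<and> F \<notin> \<F> \<union> \<N> \<union> {S} \<and> G \<subseteq> F))"
proof (intro allI impI)
  fix k G
  assume kG: "0 \<le> k \<and> k \<le> int DIM('a) - 2 \<and> G face_of P \<and> aff_dim G = k"
  have vS: "v \<in> hminus P S" using assms(10) by (simp add: VS_def)
  have vP: "v \<notin> P" using hminus_notin[OF vS] by blast
  have Gne: "G \<noteq> {}" using kG by auto
  show "(G face_of convex hull (insert v P) \<and> aff_dim G = k) \<longleftrightarrow>
            (\<exists>F. F facet_of P \<and> F \<notin> \<F> \<union> \<N> \<union> {S} \<and> G \<subseteq> F)"
  proof
    assume GQ: "G face_of convex hull (insert v P) \<and> aff_dim G = k"
    show "\<exists>F. F facet_of P \<and> F \<notin> \<F> \<union> \<N> \<union> {S} \<and> G \<subseteq> F"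
    proof (rule ccontr)
      assume no: "\<not> (\<exists>F. F facet_of P \<and> F \<notin> \<F> \<union> \<N> \<union> {S} \<and> G \<subseteq> F)"
      have key: "a \<bullet> v \<le> l" if F: "F facet_of P" "G \<subseteq> F" "a \<noteq> 0" "affine hull F = {y. a \<bullet> y = l}"
          "P \<subseteq> {y. a \<bullet> y \<ge> l}" for F a l
      proof -
        have "F \<in> \<F> \<or> F \<in> insert S \<N>" using no F(1,2) by blast
        thus ?thesis
        proof
          assume "F \<in> \<F>"
          hence "v \<in> affine hull F" using assms(10) by (simp add: VS_def)
          thus ?thesis using F(4) by simp
        next
          assume "F \<in> insert S \<N>"
          hence "v \<in> hminus P F" using assms(10) unfolding VS_def by blast
          then obtain a' l' where a': "a' \<noteq> 0" "affine hull F = {y. a' \<bullet> y = l'}"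
              "P \<subseteq> {y. a' \<bullet> y \<ge> l'}" "a' \<bullet> v < l'"
            unfolding hminus_def by blast
          obtain c where c: "a' = c *\<^sub>R a" "l' = c * l"
            using hyp_unique[OF F(3), of l a' l'] F(4) a'(2) by auto
          have "c \<noteq> 0" using a'(1) c(1) by auto
          have "c > 0"
          proof (rule ccontr)
            assume "\<not> c > 0"
            hence cn: "c < 0" using \<open>c \<noteq> 0\<close> by simp
            have "P \<subseteq> {y. a \<bullet> y = l}"
            proof
              fix y assume y: "y \<in> P"
              have "a \<bullet> y \<ge> l" using y F(5) by auto
              moreover have "c * (a \<bullet> y) \<ge> c * l" using y a'(3) c by auto
              hence "a \<bullet> y \<le> l" using cn by (simp add: mult_le_cancel_left)
              ultimately show "y \<in> {y. a \<bullet> y = l}" by simp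
            qed
            hence "aff_dim P \<le> aff_dim {y. a \<bullet> y = l}" by (rule aff_dim_subset)
            thus False using assms(3) F(3) by simp
          qed
          have "c * (a \<bullet> v) < c * l" using a'(4) c by simp
          thus ?thesis using \<open>c > 0\<close> by (simp add: mult_less_cancel_left)
        qed
      qed
      show False
        by (rule dir_only[OF assms(2) assms(3) _ Gne _ vP key]) (use kG GQ in auto)
    qed
  next
    assume "\<exists>F. F facet_of P \<and> F \<notin> \<F> \<union> \<N> \<union> {S} \<and> G \<subseteq> F"
    then obtain F where F: "F facet_of P" "F \<notin> \<F> \<union> \<N> \<union> {S}" "G \<subseteq> F" by blast
    have "v \<in> hplus P F" using assms(10) F(1,2) by (simp add: VS_def)
    hence "G face_of convex hull (insert v P)"
      using dir_if[OF assms(2) _ F(1) F(3)] kG by blast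
    thus "G face_of convex hull (insert v P) \<and> aff_dim G = k" using kG by simp
  qed
qed

end
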